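(* Let $\mathscr{H}$ be a complex Hilbert space, $N(\cdot)$ a norm on $\mathbb{B}(\mathscr{H})$, and $B,C\in\mathbb{B}(\mathscr{H})$ self-adjoint. Then $$\max\{N(B),N(C)\}\leq w_{(N,e)}(B,C)\leq\sqrt{N^2(B)+N^2(C)}.$$
   Context: For $T\in\mathbb{B}(\mathscr{H})$, $\Re(T)=\frac12(T+T^* )$. For $B,C\in\mathbb{B}(\mathscr{H})$, $w_{(N,e)}(B,C)=\sup_{\lambda_1,\lambda_2\in\mathbb{C},\ |\lambda_1|^2+|\lambda_2|^2\leq 1}\sup_{\theta\in\mathbb{R}} N(\Re(e^{i\theta}(\lambda_1B+\lambda_2C)))$. *)

theory Defs
  imports "HOL-Analysis.Analysis"
begin

text \<open>HOL-Analysis has no complex inner product spaces, so we introduce the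
notion of a complex Hilbert space as a type class: a complex vector space with
a complex inner product (linear in the second argument) that is complete for
the induced norm.\<close>

class chilbert = ab_group_add +
  fixes scaleC :: "complex \<Rightarrow> 'a \<Rightarrow> 'a"
    and cinner :: "'a \<Rightarrow> 'a \<Rightarrow> complex"
  assumes scaleC_add_right: "scaleC a (x + y) = scaleC a x + scaleC a y"
    and scaleC_add_left: "scaleC (a + b) x = scaleC a x + scaleC b x"
    and scaleC_scaleC: "scaleC a (scaleC b x) = scaleC (a * b) x"
    and scaleC_one: "scaleC 1 x = x"
    and cinner_add_right: "cinner x (y + z) = cinner x y + cinner x z"
    and cinner_scaleC_right: "cinner x (scaleC c y) = c * cinner x y"
    and cinner_commute: "cinner y x = cnj (cinner x y)"
    and cinner_nonneg: "0 \<le> Re (cinner x x) \<and> Im (cinner x x) = 0"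
    and cinner_eq_zero: "cinner x x = 0 \<Longrightarrow> x = 0"
    and complete: "\<And>X :: nat \<Rightarrow> 'a.
        (\<forall>e>0. \<exists>M. \<forall>m\<ge>M. \<forall>n\<ge>M. sqrt (Re (cinner (X m - X n) (X m - X n))) < e)
        \<Longrightarrow> (\<exists>L. (\<lambda>n. sqrt (Re (cinner (X n - L) (X n - L)))) \<longlonglongrightarrow> 0)"

definition hnorm :: "'a::chilbert \<Rightarrow> real" where
  "hnorm x = sqrt (Re (cinner x x))"

definition BH :: "('a::chilbert \<Rightarrow> 'a) set" where
  "BH = {T. (\<forall>x y. T (x + y) = T x + T y) \<and> (\<forall>c x. T (scaleC c x) = scaleC c (T x))
            \<and> (\<exists>K. \<forall>x. hnorm (T x) \<le> K * hnorm x)}"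

definition op_add :: "('a::chilbert \<Rightarrow> 'a) \<Rightarrow> ('a \<Rightarrow> 'a) \<Rightarrow> ('a \<Rightarrow> 'a)" where
  "op_add S T = (\<lambda>x. S x + T x)"

definition op_scale :: "complex \<Rightarrow> ('a::chilbert \<Rightarrow> 'a) \<Rightarrow> ('a \<Rightarrow> 'a)" where
  "op_scale c T = (\<lambda>x. scaleC c (T x))"

definition adjoint :: "('a::chilbert \<Rightarrow> 'a) \<Rightarrow> ('a \<Rightarrow> 'a)" where
  "adjoint T = (THE S. \<forall>x y. cinner (T x) y = cinner x (S y))"

definition selfadjoint :: "('a::chilbert \<Rightarrow> 'a) \<Rightarrow> bool" where
  "selfadjoint T \<longleftrightarrow> T \<in> BH \<and> adjoint T = T"

definition ReOp :: "('a::chilbert \<Rightarrow> 'a) \<Rightarrow> ('a \<Rightarrow> 'a)" where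
  "ReOp T = op_scale (1/2) (op_add T (adjoint T))"

definition is_norm_on_BH :: "(('a::chilbert \<Rightarrow> 'a) \<Rightarrow> real) \<Rightarrow> bool" where
  "is_norm_on_BH N \<longleftrightarrow>
     (\<forall>T\<in>BH. 0 \<le> N T) \<and> (\<forall>T\<in>BH. N T = 0 \<longleftrightarrow> T = (\<lambda>x. 0)) \<and>
     (\<forall>T\<in>BH. \<forall>c. N (op_scale c T) = cmod c * N T) \<and>
     (\<forall>S\<in>BH. \<forall>T\<in>BH. N (op_add S T) \<le> N S + N T)"

definition w_Ne :: "(('a::chilbert \<Rightarrow> 'a) \<Rightarrow> real) \<Rightarrow> ('a \<Rightarrow> 'a) \<Rightarrow> ('a \<Rightarrow> 'a) \<Rightarrow> real" where
  "w_Ne N B C = Sup {N (ReOp (op_scale (exp (\<i> * complex_of_real \<theta>))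
                         (op_add (op_scale l1 B) (op_scale l2 C))))
                     | l1 l2 \<theta>. (cmod l1)\<^sup>2 + (cmod l2)\<^sup>2 \<le> 1}"

end

theory Submission
  imports Defs
begin

lemma scaleC_zero_left[simp]: "scaleC 0 x = (0::'a::chilbert)"
proof -
  have "scaleC 0 x = scaleC (0+0) x" by simp
  also have "\<dots> = scaleC 0 x + scaleC 0 x" by (rule scaleC_add_left)
  finally show ?thesis by simp
qed

lemma scaleC_zero_right[simp]: "scaleC a 0 = (0::'a::chilbert)"
proof -
  have "scaleC a (0::'a) = scaleC a (0+0)" by simp
  also have "\<dots> = scaleC a 0 + scaleC a 0" by (rule scaleC_add_right)
  finally show ?thesis by simp
qed

lemma scaleC_minus_right: "scaleC a (- x) = - scaleC a (x::'a::chilbert)"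
proof -
  have "scaleC a (- x) + scaleC a x = scaleC a (- x + x)" by (rule scaleC_add_right[symmetric])
  then have "scaleC a (- x) + scaleC a x = 0" by simp
  then show ?thesis by (simp add: eq_neg_iff_add_eq_0)
qed

lemma scaleC_diff_right: "scaleC a (x - y) = scaleC a x - scaleC a (y::'a::chilbert)"
  unfolding diff_conv_add_uminus by (simp only: scaleC_add_right scaleC_minus_right)

lemma scaleC_minus_left: "scaleC (- a) x = - scaleC a (x::'a::chilbert)"
proof -
  have "scaleC (- a) x + scaleC a x = scaleC (- a + a) x" by (rule scaleC_add_left[symmetric])
  then have "scaleC (- a) x + scaleC a x = 0" by simp
  then show ?thesis by (simp add: eq_neg_iff_add_eq_0)
qed

lemma cinner_zero_right[simp]: "cinner x (0::'a::chilbert) = 0"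
proof -
  have "cinner x (0::'a) = cinner x (0+0)" by simp
  also have "\<dots> = cinner x 0 + cinner x 0" by (rule cinner_add_right)
  finally show ?thesis by simp
qed

lemma cinner_minus_right: "cinner x (- y) = - cinner x (y::'a::chilbert)"
proof -
  have "cinner x (- y) + cinner x y = cinner x (- y + y)" by (rule cinner_add_right[symmetric])
  then have "cinner x (- y) + cinner x y = 0" by simp
  then show ?thesis by (simp add: eq_neg_iff_add_eq_0)
qed

lemma cinner_diff_right: "cinner x (y - z) = cinner x y - cinner x (z::'a::chilbert)"
  unfolding diff_conv_add_uminus by (simp only: cinner_add_right cinner_minus_right)

lemma cinner_add_left: "cinner (x + y) z = cinner x z + cinner y (z::'a::chilbert)"
  by (metis cinner_commute cinner_add_right complex_cnj_add)

lemma cinner_diff_left: "cinner (x - y) z = cinner x z - cinner y (z::'a::chilbert)"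
  by (metis cinner_commute cinner_diff_right complex_cnj_diff)

lemma cinner_zero_left[simp]: "cinner (0::'a::chilbert) x = 0"
  by (metis cinner_commute cinner_zero_right complex_cnj_zero)

lemma cinner_scaleC_left: "cinner (scaleC c x) y = cnj c * cinner x (y::'a::chilbert)"
  by (metis cinner_commute cinner_scaleC_right complex_cnj_mult)

lemma cinner_self_real: "cinner x x = complex_of_real (Re (cinner x (x::'a::chilbert)))"
  using cinner_nonneg[of x] by (simp add: complex_eq_iff)

lemma hnorm_nonneg: "0 \<le> hnorm (x::'a::chilbert)"
  using cinner_nonneg[of x] by (simp add: hnorm_def)

lemma hnorm_sq: "(hnorm x)\<^sup>2 = Re (cinner x (x::'a::chilbert))"
  using cinner_nonneg[of x] by (simp add: hnorm_def)

lemma hnorm_eq_0: "hnorm x = 0 \<longleftrightarrow> x = (0::'a::chilbert)"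
proof
  assume "hnorm x = 0"
  then have "Re (cinner x x) = 0" using hnorm_sq[of x] by simp
  then have "cinner x x = 0" by (metis cinner_self_real of_real_0)
  then show "x = 0" by (rule cinner_eq_zero)
qed (simp add: hnorm_def)

lemma hnorm_scaleC: "hnorm (scaleC c x) = cmod c * hnorm (x::'a::chilbert)"
proof -
  have "cinner (scaleC c x) (scaleC c x) = cnj c * c * cinner x x"
    by (simp add: cinner_scaleC_left cinner_scaleC_right)
  also have "cnj c * c = complex_of_real ((cmod c)\<^sup>2)"
    by (metis complex_norm_square mult.commute of_real_power)
  finally have "Re (cinner (scaleC c x) (scaleC c x)) = Re (complex_of_real ((cmod c)\<^sup>2) * cinner x x)"
    by simp
  then have "Re (cinner (scaleC c x) (scaleC c x)) = (cmod c)\<^sup>2 * Re (cinner x x)"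
    by simp
  then show ?thesis by (simp add: hnorm_def real_sqrt_mult)
qed

lemma Re_cinner_add: "Re (cinner (x+y) (x+y)) = Re (cinner x x) + Re (cinner y y) + 2 * Re (cinner x (y::'a::chilbert))"
proof -
  have "Re (cinner y x) = Re (cinner x y)" by (subst cinner_commute) simp
  then show ?thesis by (simp add: cinner_add_left cinner_add_right)
qed

lemma Re_cinner_diff: "Re (cinner (x-y) (x-y)) = Re (cinner x x) + Re (cinner y y) - 2 * Re (cinner x (y::'a::chilbert))"
proof -
  have "Re (cinner y x) = Re (cinner x y)" by (subst cinner_commute) simp
  then show ?thesis by (simp add: cinner_diff_left cinner_diff_right)
qed

lemma cs_Re: "Re (cinner x y) \<le> hnorm x * hnorm (y::'a::chilbert)"
proof (cases "y = 0")
  case True then show ?thesis by (simp add: hnorm_def)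
next
  case False
  define A where "A = Re (cinner x x)"
  define Bq where "Bq = Re (cinner y y)"
  define r where "r = Re (cinner x y)"
  have "hnorm y > 0" using False hnorm_eq_0[of y] hnorm_nonneg[of y] by linarith
  then have Bpos: "Bq > 0" using hnorm_sq[of y] unfolding Bq_def by (metis zero_less_power2 less_irrefl)
  have A0: "A \<ge> 0" unfolding A_def using cinner_nonneg by blast
  define t where "t = r / Bq"
  have "0 \<le> Re (cinner (x - scaleC (complex_of_real t) y) (x - scaleC (complex_of_real t) y))"
    using cinner_nonneg by blast
  also have "\<dots> = A + t\<^sup>2 * Bq - 2 * t * r"
  proof -
    have e1: "cinner (scaleC (complex_of_real t) y) (scaleC (complex_of_real t) y) = complex_of_real (t*t) * cinner y y"
      by (simp only: cinner_scaleC_left cinner_scaleC_right complex_cnj_complex_of_real mult.assoc of_real_mult)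
    have e2: "cinner x (scaleC (complex_of_real t) y) = complex_of_real t * cinner x y"
      by (rule cinner_scaleC_right)
    show ?thesis unfolding Re_cinner_diff A_def Bq_def r_def e1 e2 power2_eq_square
      by simp
  qed
  also have "\<dots> = A - r\<^sup>2 / Bq" using Bpos unfolding t_def power2_eq_square
    by (simp add: field_simps)
  finally have "r\<^sup>2 / Bq \<le> A" by simp
  then have "r\<^sup>2 \<le> A * Bq" using Bpos by (simp add: pos_divide_le_eq)
  then have "sqrt (r\<^sup>2) \<le> sqrt (A * Bq)" by (rule real_sqrt_le_mono)
  then have "\<bar>r\<bar> \<le> sqrt A * sqrt Bq" by (simp add: real_sqrt_mult)
  then show ?thesis unfolding r_def A_def Bq_def hnorm_def by linarith
qed

lemma cs: "cmod (cinner x y) \<le> hnorm x * hnorm (y::'a::chilbert)"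
proof (cases "cinner x y = 0")
  case True then show ?thesis using hnorm_nonneg[of x] hnorm_nonneg[of y] by simp
next
  case False
  define w where "w = cinner x y"
  have w0: "w \<noteq> 0" using False w_def by simp
  define c where "c = cnj w / complex_of_real (cmod w)"
  have cm: "cmod c = 1" using w0 unfolding c_def by (simp add: norm_divide)
  have sq0: "complex_of_real ((cmod w)\<^sup>2) = w * cnj w" by (rule complex_norm_square)
  have sq: "cnj w * w = (complex_of_real (cmod w))\<^sup>2" unfolding of_real_power[symmetric] sq0 by (rule mult.commute)
  have "c * w = (cnj w * w) / complex_of_real (cmod w)" unfolding c_def by simp
  also have "\<dots> = complex_of_real (cmod w)" unfolding sq using w0 by (simp add: power2_eq_square)
  finally have cw: "c * w = complex_of_real (cmod w)" .
  have "cinner x (scaleC c y) = c * w" unfolding w_def by (rule cinner_scaleC_right)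
  then have "cmod w = Re (cinner x (scaleC c y))" using cw by simp
  also have "\<dots> \<le> hnorm x * hnorm (scaleC c y)" by (rule cs_Re)
  also have "\<dots> = hnorm x * hnorm y" unfolding hnorm_scaleC cm by simp
  finally show ?thesis unfolding w_def .
qed

lemma hnorm_triangle: "hnorm (x + y) \<le> hnorm x + hnorm (y::'a::chilbert)"
proof -
  have "(hnorm (x+y))\<^sup>2 = Re (cinner x x) + Re (cinner y y) + 2 * Re (cinner x y)"
    by (simp only: hnorm_sq Re_cinner_add)
  also have "\<dots> \<le> (hnorm x)\<^sup>2 + (hnorm y)\<^sup>2 + 2 * hnorm x * hnorm y"
    unfolding hnorm_sq using cs_Re[of x y] by linarith
  also have "\<dots> = (hnorm x + hnorm y)\<^sup>2" by (rule power2_sum[symmetric])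
  finally show ?thesis by (rule power2_le_imp_le) (simp add: hnorm_nonneg)
qed


lemma hnorm_minus_commute: "hnorm (x - y) = hnorm (y - (x::'a::chilbert))"
proof -
  have "Re (cinner y x) = Re (cinner x y)" by (subst cinner_commute) simp
  then have "Re (cinner (x-y) (x-y)) = Re (cinner (y-x) (y-x))" unfolding Re_cinner_diff by simp
  then show ?thesis unfolding hnorm_def by simp
qed

lemma riesz:
  fixes f :: "'a::chilbert \<Rightarrow> complex"
  assumes add: "\<And>x y. f (x+y) = f x + f y" and hom: "\<And>c x. f (scaleC c x) = c * f x"
    and bnd: "\<And>x. cmod (f x) \<le> K * hnorm x"
  shows "\<exists>z. \<forall>x. f x = cinner z x"
proof (cases "\<forall>x. f x = 0")
  case True then show ?thesis by (intro exI[of _ 0]) simp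
next
  case False
  then obtain x1 where x1: "f x1 \<noteq> 0" by blast
  have f0: "f 0 = 0" using hom[of 0 0] by simp
  have fdiff: "f (x - y) = f x - f y" for x y
  proof -
    have "f (x - y) + f y = f (x - y + y)" by (rule add[symmetric])
    then show ?thesis by (simp add: eq_diff_eq)
  qed
  define S where "S = {x. f x = 1}"
  have S_ne: "scaleC (1 / f x1) x1 \<in> S" using x1 hom by (simp add: S_def)
  then have Sne: "hnorm ` S \<noteq> {}" by blast
  define d where "d = Inf (hnorm ` S)"
  have bdd: "bdd_below (hnorm ` S)" by (rule bdd_belowI[of _ 0]) (auto simp: hnorm_nonneg)
  have d_le: "d \<le> hnorm x" if "x \<in> S" for x
    unfolding d_def using that bdd by (simp add: cInf_lower)
  have d0: "0 \<le> d" unfolding d_def using Sne by (intro cInf_greatest) (auto simp: hnorm_nonneg)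
  define q where "q = (\<lambda>n::nat. d\<^sup>2 + inverse (real (Suc n)))"
  have q_pos: "d\<^sup>2 < q n" for n unfolding q_def by simp
  have "\<forall>n. \<exists>x. x \<in> S \<and> hnorm x < sqrt (q n)"
  proof
    fix n
    have "sqrt (d\<^sup>2) < sqrt (q n)" using q_pos[of n] by (rule real_sqrt_less_mono)
    then have "Inf (hnorm ` S) < sqrt (q n)" using d0 by (simp add: d_def)
    then obtain v where "v \<in> hnorm ` S" "v < sqrt (q n)" using cInf_lessD[OF Sne] by blast
    then show "\<exists>x. x \<in> S \<and> hnorm x < sqrt (q n)" by blast
  qed
  from choice[OF this] obtain X where X: "\<And>n. X n \<in> S \<and> hnorm (X n) < sqrt (q n)" by blast
  have XS: "f (X n) = 1" for n using X[of n] by (simp add: S_def)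
  have Xsq: "(hnorm (X n))\<^sup>2 < q n" for n
  proof -
    have "(hnorm (X n))\<^sup>2 < (sqrt (q n))\<^sup>2"
      using X[of n] hnorm_nonneg[of "X n"] by (intro power_strict_mono) auto
    also have "\<dots> = q n" using q_pos[of n] d0 by (simp add: q_def)
    finally show ?thesis .
  qed
  have mid: "4 * d\<^sup>2 \<le> (hnorm (X m + X n))\<^sup>2" for m n
  proof -
    have "f (scaleC (1/2) (X m + X n)) = 1" by (simp add: hom add XS)
    then have "d \<le> hnorm (scaleC (1/2) (X m + X n))" using d_le by (simp add: S_def)
    also have "\<dots> = (1/2) * hnorm (X m + X n)" by (simp add: hnorm_scaleC)
    finally have "2 * d \<le> hnorm (X m + X n)" by simp
    then have "(2 * d)\<^sup>2 \<le> (hnorm (X m + X n))\<^sup>2" using d0 by (intro power_mono) auto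
    then show ?thesis by (simp add: power_mult_distrib)
  qed
  have cauchy_sq: "(hnorm (X m - X n))\<^sup>2 \<le> 2 * inverse (real (Suc m)) + 2 * inverse (real (Suc n))" for m n
  proof -
    have par: "(hnorm (X m - X n))\<^sup>2 + (hnorm (X m + X n))\<^sup>2 = 2 * (hnorm (X m))\<^sup>2 + 2 * (hnorm (X n))\<^sup>2"
      unfolding hnorm_sq Re_cinner_add Re_cinner_diff by simp
    show ?thesis using par mid[of m n] Xsq[of m] Xsq[of n] unfolding q_def by linarith
  qed
  have "\<forall>e>0. \<exists>M. \<forall>m\<ge>M. \<forall>n\<ge>M. sqrt (Re (cinner (X m - X n) (X m - X n))) < e"
  proof (intro allI impI)
    fix e :: real assume e: "e > 0"
    obtain M :: nat where M: "4 / e\<^sup>2 < real M" using reals_Archimedean2 by blast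
    have Mpos: "0 < real M" using M e by (smt (verit) divide_nonneg_pos zero_less_power)
    show "\<exists>M. \<forall>m\<ge>M. \<forall>n\<ge>M. sqrt (Re (cinner (X m - X n) (X m - X n))) < e"
    proof (intro exI allI impI)
      fix m n assume mn: "M \<le> m" "M \<le> n"
      have im: "inverse (real (Suc m)) \<le> inverse (real M)" using mn Mpos by (intro le_imp_inverse_le) auto
      have inn: "inverse (real (Suc n)) \<le> inverse (real M)" using mn Mpos by (intro le_imp_inverse_le) auto
      have "4 * inverse (real M) < e\<^sup>2" using M Mpos e
        by (simp add: field_simps)
      then have "(hnorm (X m - X n))\<^sup>2 < e\<^sup>2" using cauchy_sq[of m n] im inn by linarith
      then have "hnorm (X m - X n) < e" using e by (simp add: power_less_imp_less_base)
      then show "sqrt (Re (cinner (X m - X n) (X m - X n))) < e" by (simp add: hnorm_def)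
    qed
  qed
  from complete[OF this] obtain L where L0: "(\<lambda>n. sqrt (Re (cinner (X n - L) (X n - L)))) \<longlonglongrightarrow> 0" by blast
  then have L: "(\<lambda>n. hnorm (X n - L)) \<longlonglongrightarrow> 0" by (simp add: hnorm_def)
  have fL: "f L = 1"
  proof -
    have "(\<lambda>n. K * hnorm (X n - L)) \<longlonglongrightarrow> K * 0" by (intro tendsto_intros L)
    moreover have "\<exists>N. \<forall>n\<ge>N. cmod (1 - f L) \<le> K * hnorm (X n - L)"
    proof (intro exI allI impI)
      fix n :: nat
      have "cmod (1 - f L) = cmod (f (X n - L))" by (simp add: fdiff XS)
      also have "\<dots> \<le> K * hnorm (X n - L)" by (rule bnd)
      finally show "cmod (1 - f L) \<le> K * hnorm (X n - L)" .
    qed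
    ultimately have "cmod (1 - f L) \<le> K * 0" by (rule LIMSEQ_le_const)
    then show ?thesis by simp
  qed
  then have LS: "L \<in> S" by (simp add: S_def)
  have hL: "hnorm L \<le> d"
  proof -
    have "(\<lambda>n. sqrt (q n) + hnorm (X n - L)) \<longlonglongrightarrow> sqrt (d\<^sup>2 + 0) + 0"
      unfolding q_def by (intro tendsto_intros L LIMSEQ_inverse_real_of_nat)
    moreover have "\<exists>N. \<forall>n\<ge>N. hnorm L \<le> sqrt (q n) + hnorm (X n - L)"
    proof (intro exI allI impI)
      fix n :: nat
      have "L = X n + (L - X n)" by simp
      then have "hnorm L \<le> hnorm (X n) + hnorm (L - X n)" using hnorm_triangle by metis
      then show "hnorm L \<le> sqrt (q n) + hnorm (X n - L)" using X[of n] hnorm_minus_commute[of L "X n"] by linarith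
    qed
    ultimately have "hnorm L \<le> sqrt (d\<^sup>2 + 0) + 0" by (rule LIMSEQ_le_const)
    then show ?thesis using d0 by simp
  qed
  have minim: "hnorm L \<le> hnorm (L + scaleC t u)" if "f u = 0" for t u
  proof -
    have "L + scaleC t u \<in> S" using fL that by (simp add: S_def add hom)
    then show ?thesis using d_le hL by fastforce
  qed
  have orth: "cinner L u = 0" if fu: "f u = 0" for u
  proof (rule ccontr)
    assume p0: "cinner L u \<noteq> 0"
    define p where "p = cinner L u"
    define nu where "nu = Re (cinner u u)"
    have nu0: "0 \<le> nu" unfolding nu_def using cinner_nonneg by blast
    define s where "s = inverse (nu + 1)"
    have s0: "0 < s" using nu0 by (simp add: s_def)
    have snu: "s * nu < 1" using nu0 by (simp add: s_def field_simps)
    define t where "t = - (complex_of_real s * cnj p)"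
    have pp: "p * cnj p = complex_of_real ((cmod p)\<^sup>2)" by (rule complex_norm_square[symmetric])
    have cp: "0 < (cmod p)\<^sup>2" using p0 by (simp add: p_def)
    have e1: "Re (cinner L (scaleC t u)) = - s * (cmod p)\<^sup>2"
    proof -
      have "cinner L (scaleC t u) = t * p" by (simp add: cinner_scaleC_right p_def)
      also have "\<dots> = - (complex_of_real s * (p * cnj p))" by (simp add: t_def mult_ac)
      finally show ?thesis unfolding pp by simp
    qed
    have e2: "Re (cinner (scaleC t u) (scaleC t u)) = s\<^sup>2 * (cmod p)\<^sup>2 * nu"
    proof -
      have "cinner (scaleC t u) (scaleC t u) = cnj t * t * cinner u u"
        by (simp add: cinner_scaleC_left cinner_scaleC_right)
      also have "cnj t * t = complex_of_real (s\<^sup>2 * (cmod p)\<^sup>2)"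
        unfolding t_def using pp by (simp add: power2_eq_square mult_ac)
      finally show ?thesis unfolding nu_def by simp
    qed
    have "(hnorm L)\<^sup>2 \<le> (hnorm (L + scaleC t u))\<^sup>2"
      using minim[OF fu, of t] hnorm_nonneg[of L] by (intro power_mono) auto
    then have "Re (cinner L L) \<le> Re (cinner L L) + s\<^sup>2 * (cmod p)\<^sup>2 * nu + 2 * (- s * (cmod p)\<^sup>2)"
      unfolding hnorm_sq Re_cinner_add e1 e2 .
    then have "0 \<le> s * (cmod p)\<^sup>2 * (s * nu - 2)" by (simp add: algebra_simps power2_eq_square)
    moreover have "s * (cmod p)\<^sup>2 * (s * nu - 2) < 0"
      using s0 cp snu by (intro mult_pos_neg) auto
    ultimately show False by linarith
  qed
  have L0ne: "L \<noteq> 0" using fL f0 by auto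
  define nL where "nL = Re (cinner L L)"
  have nL0: "nL \<noteq> 0" unfolding nL_def hnorm_sq[symmetric] using L0ne hnorm_eq_0[of L] by simp
  have rep: "cinner L x = f x * complex_of_real nL" for x
  proof -
    define u where "u = x - scaleC (f x) L"
    have fu: "f u = 0" by (simp add: u_def fdiff hom fL)
    have "x = u + scaleC (f x) L" by (simp add: u_def)
    then have "cinner L x = cinner L u + f x * cinner L L"
      by (metis cinner_add_right cinner_scaleC_right)
    also have "\<dots> = f x * complex_of_real nL" using orth[OF fu] cinner_self_real[of L] by (simp add: nL_def)
    finally show ?thesis .
  qed
  show ?thesis
  proof (intro exI allI)
    fix x
    have "cinner (scaleC (complex_of_real (inverse nL)) L) x = complex_of_real (inverse nL) * (f x * complex_of_real nL)"
      by (simp add: cinner_scaleC_left rep)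
    also have "\<dots> = f x" using nL0 by (simp add: field_simps)
    finally show "f x = cinner (scaleC (complex_of_real (inverse nL)) L) x" by simp
  qed
qed


lemma adj_exists:
  assumes T: "T \<in> BH"
  shows "\<exists>S. \<forall>x y. cinner (T x) y = cinner x (S y)"
proof -
  from T obtain K where Tadd: "\<And>x y. T (x + y) = T x + T y"
    and Thom: "\<And>c x. T (scaleC c x) = scaleC c (T x)" and TK: "\<And>x. hnorm (T x) \<le> K * hnorm x"
    unfolding BH_def by blast
  have "\<forall>y. \<exists>z. \<forall>x. cinner y (T x) = cinner z x"
  proof
    fix y :: 'a
    show "\<exists>z. \<forall>x. cinner y (T x) = cinner z x"
    proof (rule riesz[where K = "hnorm y * K"])
      fix x
      have "cmod (cinner y (T x)) \<le> hnorm y * hnorm (T x)" by (rule cs)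
      also have "\<dots> \<le> hnorm y * (K * hnorm x)" using TK[of x] hnorm_nonneg[of y] by (rule mult_left_mono)
      finally show "cmod (cinner y (T x)) \<le> hnorm y * K * hnorm x" by (simp add: mult_ac)
    qed (simp_all add: Tadd Thom cinner_add_right cinner_scaleC_right)
  qed
  from choice[OF this] obtain S where S: "\<And>y x. cinner y (T x) = cinner (S y) x" by blast
  show ?thesis
  proof (intro exI allI)
    fix x y
    have "cinner (T x) y = cnj (cinner y (T x))" by (rule cinner_commute)
    also have "\<dots> = cnj (cinner (S y) x)" by (simp add: S)
    also have "\<dots> = cinner x (S y)" by (rule cinner_commute[symmetric])
    finally show "cinner (T x) y = cinner x (S y)" .
  qed
qed

lemma adjoint_unique:
  assumes S: "\<forall>x y. cinner (T x) y = cinner x (S y)"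
  shows "adjoint T = S"
  unfolding adjoint_def
proof (rule the_equality)
  show "\<forall>x y. cinner (T x) y = cinner x (S y)" by (rule S)
next
  fix S' assume S': "\<forall>x y. cinner (T x) y = cinner x (S' y)"
  show "S' = S"
  proof
    fix y
    define v where "v = S' y - S y"
    have "cinner v v = cinner v (S' y) - cinner v (S y)" unfolding v_def by (rule cinner_diff_right)
    also have "\<dots> = 0" using S S' by simp
    finally have "v = 0" by (rule cinner_eq_zero)
    then show "S' y = S y" by (simp add: v_def)
  qed
qed

lemma selfadj_sym:
  assumes "selfadjoint B"
  shows "cinner (B x) y = cinner x (B y)"
proof -
  from assms have B: "B \<in> BH" and aB: "adjoint B = B" by (auto simp: selfadjoint_def)
  obtain S where S: "\<forall>x y. cinner (B x) y = cinner x (S y)" using adj_exists[OF B] by blast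
  have "S = B" using adjoint_unique[OF S] aB by simp
  then show ?thesis using S by simp
qed

lemma half_sum_cnj: "(1/2) * a + (1/2) * cnj a = complex_of_real (Re a)"
  by (simp add: complex_eq_iff)

lemma ReOp_formula:
  assumes B: "selfadjoint B" and C: "selfadjoint C"
  shows "ReOp (op_scale e (op_add (op_scale l1 B) (op_scale l2 C)))
       = op_add (op_scale (complex_of_real (Re (e*l1))) B) (op_scale (complex_of_real (Re (e*l2))) C)"
proof -
  define a where "a = e * l1"
  define b where "b = e * l2"
  define T where "T = op_scale e (op_add (op_scale l1 B) (op_scale l2 C))"
  have Tx: "T x = scaleC a (B x) + scaleC b (C x)" for x
    by (simp add: T_def op_scale_def op_add_def scaleC_add_right scaleC_scaleC a_def b_def)
  define S where "S = (\<lambda>y. scaleC (cnj a) (B y) + scaleC (cnj b) (C y))"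
  have "\<forall>x y. cinner (T x) y = cinner x (S y)"
  proof (intro allI)
    fix x y
    show "cinner (T x) y = cinner x (S y)"
      unfolding Tx S_def
      by (simp add: cinner_add_left cinner_add_right cinner_scaleC_left cinner_scaleC_right
           selfadj_sym[OF B] selfadj_sym[OF C])
  qed
  then have aT: "adjoint T = S" by (rule adjoint_unique)
  show ?thesis
    unfolding T_def[symmetric] ReOp_def aT
  proof
    fix x
    have "op_scale (1/2) (op_add T S) x
        = (scaleC ((1/2) * a) (B x) + scaleC ((1/2) * cnj a) (B x))
          + (scaleC ((1/2) * b) (C x) + scaleC ((1/2) * cnj b) (C x))"
      by (simp add: op_scale_def op_add_def Tx S_def scaleC_add_right scaleC_scaleC add_ac)
    also have "\<dots> = scaleC ((1/2) * a + (1/2) * cnj a) (B x) + scaleC ((1/2) * b + (1/2) * cnj b) (C x)"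
      by (simp only: scaleC_add_left)
    also have "\<dots> = op_add (op_scale (complex_of_real (Re a)) B) (op_scale (complex_of_real (Re b)) C) x"
      by (simp only: half_sum_cnj op_add_def op_scale_def)
    finally show "op_scale (1/2) (op_add T S) x
        = op_add (op_scale (complex_of_real (Re (e*l1))) B) (op_scale (complex_of_real (Re (e*l2))) C) x"
      by (simp add: a_def b_def)
  qed
qed

lemma BH_scale: "T \<in> BH \<Longrightarrow> op_scale c T \<in> BH"
proof -
  assume "T \<in> BH"
  then obtain K where Tadd: "\<And>x y. T (x + y) = T x + T y"
    and Thom: "\<And>c x. T (scaleC c x) = scaleC c (T x)" and TK: "\<And>x. hnorm (T x) \<le> K * hnorm x"
    unfolding BH_def by blast
  have "hnorm (scaleC c (T x)) \<le> (cmod c * K) * hnorm x" for x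
    using TK[of x] by (simp add: hnorm_scaleC mult.assoc mult_left_mono)
  moreover have "scaleC c (scaleC d (T x)) = scaleC d (scaleC c (T x))" for d x
    by (simp add: scaleC_scaleC mult.commute)
  ultimately show ?thesis unfolding BH_def op_scale_def
    by (auto simp: Tadd Thom scaleC_add_right)
qed

lemma sq_ineq:
  fixes a b x y :: real
  assumes "a\<^sup>2 + b\<^sup>2 \<le> 1" "0 \<le> x" "0 \<le> y"
  shows "\<bar>a\<bar> * x + \<bar>b\<bar> * y \<le> sqrt (x\<^sup>2 + y\<^sup>2)"
proof (rule real_le_rsqrt)
  define A where "A = \<bar>a\<bar>"
  define Bb where "Bb = \<bar>b\<bar>"
  have AB: "A\<^sup>2 + Bb\<^sup>2 \<le> 1" using assms(1) by (simp add: A_def Bb_def)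
  have id: "(A\<^sup>2 + Bb\<^sup>2) * (x\<^sup>2 + y\<^sup>2) - (A * x + Bb * y)\<^sup>2 = (A * y - Bb * x)\<^sup>2"
    by (simp add: power2_eq_square algebra_simps)
  have "(A * x + Bb * y)\<^sup>2 \<le> (A\<^sup>2 + Bb\<^sup>2) * (x\<^sup>2 + y\<^sup>2)" using id by (smt (verit) zero_le_power2)
  also have "\<dots> \<le> 1 * (x\<^sup>2 + y\<^sup>2)" using AB by (intro mult_right_mono) auto
  finally show "(\<bar>a\<bar> * x + \<bar>b\<bar> * y)\<^sup>2 \<le> x\<^sup>2 + y\<^sup>2" by (simp add: A_def Bb_def)
qed

theorem corollary2p5:
  fixes N :: "('h::chilbert \<Rightarrow> 'h) \<Rightarrow> real" and B C :: "'h \<Rightarrow> 'h"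
  assumes "is_norm_on_BH N"
    and "selfadjoint B" and "selfadjoint C"
  shows "max (N B) (N C) \<le> w_Ne N B C \<and> w_Ne N B C \<le> sqrt ((N B)\<^sup>2 + (N C)\<^sup>2)"
proof -
  have BH: "B \<in> BH" "C \<in> BH" using assms(2,3) by (auto simp: selfadjoint_def)
  have N0: "0 \<le> N B" "0 \<le> N C" using assms(1) BH by (auto simp: is_norm_on_BH_def)
  define W where "W = {N (ReOp (op_scale (exp (\<i> * complex_of_real \<theta>))
                         (op_add (op_scale l1 B) (op_scale l2 C))))
                     | l1 l2 \<theta>. (cmod l1)\<^sup>2 + (cmod l2)\<^sup>2 \<le> 1}"
  have wW: "w_Ne N B C = Sup W" unfolding w_Ne_def W_def ..
  have elem: "N (ReOp (op_scale (exp (\<i> * complex_of_real \<theta>)) (op_add (op_scale l1 B) (op_scale l2 C))))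
     = N (op_add (op_scale (complex_of_real (Re (exp (\<i> * complex_of_real \<theta>) * l1))) B)
                 (op_scale (complex_of_real (Re (exp (\<i> * complex_of_real \<theta>) * l2))) C))" for \<theta> l1 l2
    by (simp only: ReOp_formula[OF assms(2,3)])
  have ub: "w \<le> sqrt ((N B)\<^sup>2 + (N C)\<^sup>2)" if "w \<in> W" for w
  proof -
    from that obtain l1 l2 \<theta> where w: "w = N (ReOp (op_scale (exp (\<i> * complex_of_real \<theta>))
                         (op_add (op_scale l1 B) (op_scale l2 C))))"
      and l: "(cmod l1)\<^sup>2 + (cmod l2)\<^sup>2 \<le> 1" unfolding W_def by blast
    define e where "e = exp (\<i> * complex_of_real \<theta>)"
    have ce: "cmod e = 1" unfolding e_def by simp
    define a where "a = Re (e * l1)"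
    define b where "b = Re (e * l2)"
    have a2: "a\<^sup>2 \<le> (cmod l1)\<^sup>2"
    proof -
      have "\<bar>a\<bar> \<le> cmod (e * l1)" unfolding a_def by (rule abs_Re_le_cmod)
      also have "\<dots> = cmod l1" by (simp add: norm_mult ce)
      finally show ?thesis by (metis abs_ge_zero power2_abs power_mono)
    qed
    have b2: "b\<^sup>2 \<le> (cmod l2)\<^sup>2"
    proof -
      have "\<bar>b\<bar> \<le> cmod (e * l2)" unfolding b_def by (rule abs_Re_le_cmod)
      also have "\<dots> = cmod l2" by (simp add: norm_mult ce)
      finally show ?thesis by (metis abs_ge_zero power2_abs power_mono)
    qed
    have "w = N (op_add (op_scale (complex_of_real a) B) (op_scale (complex_of_real b) C))"
      unfolding w elem a_def b_def e_def ..
    also have "\<dots> \<le> N (op_scale (complex_of_real a) B) + N (op_scale (complex_of_real b) C)"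
      using assms(1) BH_scale[OF BH(1)] BH_scale[OF BH(2)] unfolding is_norm_on_BH_def by blast
    also have "\<dots> = \<bar>a\<bar> * N B + \<bar>b\<bar> * N C"
      using assms(1) BH unfolding is_norm_on_BH_def by simp
    also have "\<dots> \<le> sqrt ((N B)\<^sup>2 + (N C)\<^sup>2)"
      using a2 b2 l N0 by (intro sq_ineq) auto
    finally show ?thesis .
  qed
  have memB: "N B \<in> W"
  proof -
    have "N (ReOp (op_scale (exp (\<i> * complex_of_real 0)) (op_add (op_scale 1 B) (op_scale 0 C)))) \<in> W"
      unfolding W_def mem_Collect_eq by (rule exI[of _ 1], rule exI[of _ 0], rule exI[of _ 0]) simp
    moreover have "op_add (op_scale (complex_of_real (Re (exp (\<i> * complex_of_real 0) * 1))) B)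
                 (op_scale (complex_of_real (Re (exp (\<i> * complex_of_real 0) * 0))) C) = B"
      by (simp add: op_add_def op_scale_def scaleC_one)
    ultimately show ?thesis unfolding elem by simp
  qed
  have memC: "N C \<in> W"
  proof -
    have "N (ReOp (op_scale (exp (\<i> * complex_of_real 0)) (op_add (op_scale 0 B) (op_scale 1 C)))) \<in> W"
      unfolding W_def mem_Collect_eq by (rule exI[of _ 0], rule exI[of _ 1], rule exI[of _ 0]) simp
    moreover have "op_add (op_scale (complex_of_real (Re (exp (\<i> * complex_of_real 0) * 0))) B)
                 (op_scale (complex_of_real (Re (exp (\<i> * complex_of_real 0) * 1))) C) = C"
      by (simp add: op_add_def op_scale_def scaleC_one)
    ultimately show ?thesis unfolding elem by simp
  qed
  have bdd: "bdd_above W" using ub by (intro bdd_aboveI) 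
  have "N B \<le> Sup W" using memB bdd by (rule cSup_upper)
  moreover have "N C \<le> Sup W" using memC bdd by (rule cSup_upper)
  moreover have "Sup W \<le> sqrt ((N B)\<^sup>2 + (N C)\<^sup>2)" using memB ub by (intro cSup_least) auto
  ultimately show ?thesis unfolding wW by simp
qed

end
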